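(* In the fixed-routing setting, let $y=[y_i(k)]_{k\in\mathcal C,\,i\notin\mathcal S_k}\in[0,1]^{n}$, and define $$A(y)=T(\mathbf 0)-\sum_{(i,j)\in\mathcal E}D_{ij}(F_{ij}(y)),\qquad B(y)=\sum_{i\in\mathcal V}B_i(Y_i),$$ where $T(\mathbf 0)=\sum_{(i,j)}D_{ij}(F_{ij}(\mathbf 0))$ is assumed finite. Then $A$ is nonnegative, monotonically nondecreasing and DR-submodular on $[0,1]^n$, and $B$ is convex. Hence maximizing $G(y)=A(y)-B(y)$ over $[0,1]^n$ is a "DR-submodular + concave" maximization problem.
   Context: Network model: finite directed graph $(\mathcal V,\mathcal E)$ with symmetric links, finite catalog $\mathcal C$, designated server sets $\mathcal S_k\neq\emptyset$, exogenous request rates $r_v(k)\ge0$; each $D_{ij}$, $B_i$ is twice continuously differentiable, increasing, convex, with value $0$ at $0$; $Y_i=\sum_k y_i(k)$. Fixed routing: for each $k$ and each $i\notin\mathcal S_k$ there is a fixed next hop $j_i(k)\in\mathcal N(i)$. For each $v$ and $k$, the path $p_{vk}=(p^1_{vk},\dots,p^{|p_{vk}|}_{vk})$ is defined by $p^1_{vk}=v$, $p^{l+1}_{vk}=j_{p^l_{vk}}(k)$, ending at a node $s_k\in\mathcal S_k$; every such path is assumed loop-free with no intermediate node in $\mathcal S_k$. $(i,j)\in p_{vk}$ means $i,j$ are consecutive on $p_{vk}$; $l_{p_{vk}}(i)$ is the position of $i$ on $p_{vk}$. The link flows are $$f_{ji}(k)=\sum_{v:(i,j)\in p_{vk}}r_v(k)\prod_{l'=1}^{l_{p_{vk}}(i)}\big(1-y_{p^{l'}_{vk}}(k)\big),\qquad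 F_{ji}=\sum_k f_{ji}(k).$$ A function $A$ on a box $[0,1]^n$ is DR-submodular if for all $a\le b$ (coordinatewise), every coordinate vector $e_m$ and every $\epsilon\ge0$ with $a+\epsilon e_m,b+\epsilon e_m$ in the box, $A(a+\epsilon e_m)-A(a)\ge A(b+\epsilon e_m)-A(b)$ (for twice differentiable $A$, equivalently all second partial derivatives are $\le 0$). *)

theory Defs
  imports "HOL-Analysis.Analysis"
begin

definition route_path :: "('v \<Rightarrow> 'k \<Rightarrow> 'v) \<Rightarrow> ('k \<Rightarrow> 'v set) \<Rightarrow> 'v \<Rightarrow> 'k \<Rightarrow> 'v list" where
  "route_path nh S v k =
     map (\<lambda>l. ((\<lambda>i. nh i k) ^^ l) v) [0..<Suc (LEAST n. ((\<lambda>i. nh i k) ^^ n) v \<in> S k)]"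

text \<open>Flow f_ji(k) (0-indexed positions: i = p!m, j = p!(m+1); product over
  positions 0..m, i.e. the paper's l' = 1..l_p(i)).\<close>
definition flow_k :: "'v set \<Rightarrow> ('v \<Rightarrow> 'k \<Rightarrow> 'v) \<Rightarrow> ('k \<Rightarrow> 'v set) \<Rightarrow> ('v \<Rightarrow> 'k \<Rightarrow> real)
    \<Rightarrow> ('v \<times> 'k \<Rightarrow> real) \<Rightarrow> 'v \<Rightarrow> 'v \<Rightarrow> 'k \<Rightarrow> real" where
  "flow_k V nh S r y j i k =
     (\<Sum>v\<in>V. let p = route_path nh S v k in
        \<Sum>m\<in>{m. Suc m < length p \<and> p ! m = i \<and> p ! Suc m = j}.
           r v k * (\<Prod>l\<in>{..m}. (1 - y (p ! l, k))))"

definition flow :: "'v set \<Rightarrow> 'k set \<Rightarrow> ('v \<Rightarrow> 'k \<Rightarrow> 'v) \<Rightarrow> ('k \<Rightarrow> 'v set) \<Rightarrow> ('v \<Rightarrow> 'k \<Rightarrow> real)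
    \<Rightarrow> ('v \<times> 'k \<Rightarrow> real) \<Rightarrow> 'v \<Rightarrow> 'v \<Rightarrow> real" where
  "flow V C nh S r y j i = (\<Sum>k\<in>C. flow_k V nh S r y j i k)"

definition var_index :: "'v set \<Rightarrow> 'k set \<Rightarrow> ('k \<Rightarrow> 'v set) \<Rightarrow> ('v \<times> 'k) set" where
  "var_index V C S = {(i, k). i \<in> V \<and> k \<in> C \<and> i \<notin> S k}"

text \<open>The box [0,1]^I, realised as functions vanishing outside I.\<close>
definition unit_box :: "'a set \<Rightarrow> ('a \<Rightarrow> real) set" where
  "unit_box I = {y. (\<forall>p\<in>I. 0 \<le> y p \<and> y p \<le> 1) \<and> (\<forall>p. p \<notin> I \<longrightarrow> y p = 0)}"

definition dr_submodular_on :: "('a \<Rightarrow> real) set \<Rightarrow> (('a \<Rightarrow> real) \<Rightarrow> real) \<Rightarrow> bool" where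
  "dr_submodular_on X A \<longleftrightarrow>
     (\<forall>a b m (\<epsilon>::real). a \<in> X \<and> b \<in> X \<and> a \<le> b \<and> \<epsilon> \<ge> 0 \<and>
        a(m := a m + \<epsilon>) \<in> X \<and> b(m := b m + \<epsilon>) \<in> X \<longrightarrow>
        A (a(m := a m + \<epsilon>)) - A a \<ge> A (b(m := b m + \<epsilon>)) - A b)"

definition convex_fun_on :: "('a \<Rightarrow> real) set \<Rightarrow> (('a \<Rightarrow> real) \<Rightarrow> real) \<Rightarrow> bool" where
  "convex_fun_on X g \<longleftrightarrow>
     (\<forall>x\<in>X. \<forall>y\<in>X. \<forall>t::real. 0 \<le> t \<and> t \<le> 1 \<longrightarrow>
        g (\<lambda>p. t * x p + (1 - t) * y p) \<le> t * g x + (1 - t) * g y)"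

definition cost_fun :: "(real \<Rightarrow> real) \<Rightarrow> bool" where
  "cost_fun g \<longleftrightarrow>
     (\<exists>g1 g2. (\<forall>x\<ge>0. (g has_real_derivative g1 x) (at x within {0..}) \<and>
                       (g1 has_real_derivative g2 x) (at x within {0..}))
             \<and> continuous_on {0..} g2)
     \<and> mono_on {0..} g \<and> convex_on {0..} g \<and> g 0 = 0"

end

theory Submission
  imports Defs
begin


lemma incr_convex:
  fixes g :: "real \<Rightarrow> real"
  assumes cv: "convex_on {0..} g" and x2: "0 \<le> x2" and xz: "x2 \<le> z" and h: "0 \<le> h"
  shows "g (x2 + h) - g x2 \<le> g (z + h) - g z"
proof (cases "h = 0 \<or> x2 = z")
  case True then show ?thesis by auto
next
  case False
  then have hp: "h > 0" and lt: "x2 < z" using h xz by auto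
  define L where "L = z + h - x2"
  have Lp: "L > 0" using hp lt by (simp add: L_def)
  define s where "s = h / L"
  define t where "t = (z - x2) / L"
  have s01: "0 \<le> s" "s \<le> 1" using hp lt Lp by (auto simp: s_def L_def field_simps)
  have t01: "0 \<le> t" "t \<le> 1" using hp lt Lp by (auto simp: t_def L_def field_simps)
  have "s + t = (h + (z - x2)) / L" by (simp add: s_def t_def add_divide_distrib)
  also have "\<dots> = 1" using Lp by (simp add: L_def)
  finally have st: "s + t = 1" .
  have sL: "s * L = h" using Lp by (simp add: s_def)
  have tL: "t * L = z - x2" using Lp by (simp add: t_def)
  have "(1 - s) *\<^sub>R x2 + s *\<^sub>R (z + h) = x2 + s * L" by (simp add: L_def algebra_simps)
  then have e1: "(1 - s) *\<^sub>R x2 + s *\<^sub>R (z + h) = x2 + h" using sL by simp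
  have "(1 - t) *\<^sub>R x2 + t *\<^sub>R (z + h) = x2 + t * L" by (simp add: L_def algebra_simps)
  then have e2: "(1 - t) *\<^sub>R x2 + t *\<^sub>R (z + h) = z" using tL by simp
  have A: "g (x2 + h) \<le> (1 - s) * g x2 + s * g (z + h)"
    using convex_onD[OF cv s01, of x2 "z+h"] x2 xz h e1 by simp
  have B: "g z \<le> (1 - t) * g x2 + t * g (z + h)"
    using convex_onD[OF cv t01, of x2 "z+h"] x2 xz h e2 by simp
  have "g (x2 + h) + g z \<le> (2 - (s+t)) * g x2 + (s + t) * g (z + h)"
    using A B by (simp add: algebra_simps)
  then show ?thesis using st by simp
qed

lemma key_convex:
  fixes g :: "real \<Rightarrow> real"
  assumes cv: "convex_on {0..} g" and mo: "mono_on {0..} g"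
    and "0 \<le> x2" "x2 \<le> x1" "0 \<le> y2" "y2 \<le> y1" "x1 \<le> y1" "x1 - x2 \<le> y1 - y2"
  shows "g x1 - g x2 \<le> g y1 - g y2"
proof -
  define h where "h = x1 - x2"
  define z where "z = y1 - h"
  have "g y2 \<le> g z" using mo assms by (intro mono_onD[OF mo]) (auto simp: z_def h_def)
  moreover have "g (x2 + h) - g x2 \<le> g (z + h) - g z"
    using incr_convex[OF cv, of x2 z h] assms by (simp add: z_def h_def)
  ultimately show ?thesis by (simp add: z_def h_def)
qed

lemma prod_diff:
  fixes a b :: "'a \<Rightarrow> real"
  assumes fin: "finite Q" and a0: "\<forall>q. 0 \<le> a q" and ab: "\<forall>q. a q \<le> b q" and b1: "\<forall>q. b q \<le> 1"
    and e: "0 \<le> \<epsilon>"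
  shows "(\<Prod>q\<in>Q. 1 - b q) - (\<Prod>q\<in>Q. 1 - (b(n := b n + \<epsilon>)) q)
       \<le> (\<Prod>q\<in>Q. 1 - a q) - (\<Prod>q\<in>Q. 1 - (a(n := a n + \<epsilon>)) q)"
proof (cases "n \<in> Q")
  case False
  then have "\<And>x::'a\<Rightarrow>real. (\<Prod>q\<in>Q. 1 - (x(n := x n + \<epsilon>)) q) = (\<Prod>q\<in>Q. 1 - x q)"
    by (intro prod.cong) auto
  then show ?thesis by simp
next
  case True
  have R: "\<And>x::'a\<Rightarrow>real. (\<Prod>q\<in>Q - {n}. 1 - (x(n := x n + \<epsilon>)) q) = (\<Prod>q\<in>Q - {n}. 1 - x q)"
    by (intro prod.cong) auto
  have D: "\<And>x::'a\<Rightarrow>real. (\<Prod>q\<in>Q. 1 - x q) - (\<Prod>q\<in>Q. 1 - (x(n := x n + \<epsilon>)) q)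
        = \<epsilon> * (\<Prod>q\<in>Q - {n}. 1 - x q)"
  proof -
    fix x :: "'a \<Rightarrow> real"
    have 1: "(\<Prod>q\<in>Q. 1 - x q) = (1 - x n) * (\<Prod>q\<in>Q - {n}. 1 - x q)"
      by (rule prod.remove[OF fin True])
    have 2: "(\<Prod>q\<in>Q. 1 - (x(n := x n + \<epsilon>)) q) = (1 - (x n + \<epsilon>)) * (\<Prod>q\<in>Q - {n}. 1 - x q)"
      using prod.remove[OF fin True, of "\<lambda>q. 1 - (x(n := x n + \<epsilon>)) q"] R by simp
    show "(\<Prod>q\<in>Q. 1 - x q) - (\<Prod>q\<in>Q. 1 - (x(n := x n + \<epsilon>)) q)
        = \<epsilon> * (\<Prod>q\<in>Q - {n}. 1 - x q)" unfolding 1 2 by (simp add: algebra_simps)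
  qed
  have "(\<Prod>q\<in>Q - {n}. 1 - b q) \<le> (\<Prod>q\<in>Q - {n}. 1 - a q)"
    by (intro prod_mono) (use ab b1 in auto)
  then show ?thesis unfolding D using e by (simp add: mult_left_mono)
qed

lemma prod_mono1:
  fixes a b :: "'a \<Rightarrow> real"
  assumes "\<forall>q. a q \<le> b q" and "\<forall>q. b q \<le> 1"
  shows "(\<Prod>q\<in>Q. 1 - b q) \<le> (\<Prod>q\<in>Q. 1 - a q)"
  by (intro prod_mono) (use assms in auto)

lemma prod_nn:
  fixes b :: "'a \<Rightarrow> real"
  assumes "\<forall>q. b q \<le> 1"
  shows "0 \<le> (\<Prod>q\<in>Q. 1 - b q)"
  by (intro prod_nonneg) (use assms in auto)

lemma term_dr:
  fixes a b :: "'v \<times> 'k \<Rightarrow> real"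
  assumes d: "distinct p" and m: "m < length p" and c: "0 \<le> c"
    and a0: "\<forall>q. 0 \<le> a q" and ab: "\<forall>q. a q \<le> b q" and b1: "\<forall>q. b q \<le> 1" and e: "0 \<le> \<epsilon>"
  shows "c * (\<Prod>l\<in>{..m}. 1 - b (p!l, k)) - c * (\<Prod>l\<in>{..m}. 1 - (b(n := b n + \<epsilon>)) (p!l, k))
       \<le> c * (\<Prod>l\<in>{..m}. 1 - a (p!l, k)) - c * (\<Prod>l\<in>{..m}. 1 - (a(n := a n + \<epsilon>)) (p!l, k))"
proof -
  have inj: "inj_on (\<lambda>l. (p!l, k)) {..m}"
    using d m by (auto simp: inj_on_def nth_eq_iff_index_eq)
  have eq: "\<And>x. (\<Prod>l\<in>{..m}. 1 - x (p!l, k)) = (\<Prod>q\<in>(\<lambda>l. (p!l, k)) ` {..m}. 1 - x q)"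
    by (simp add: prod.reindex[OF inj])
  have "(\<Prod>q\<in>(\<lambda>l. (p!l, k)) ` {..m}. 1 - b q) - (\<Prod>q\<in>(\<lambda>l. (p!l, k)) ` {..m}. 1 - (b(n := b n + \<epsilon>)) q)
       \<le> (\<Prod>q\<in>(\<lambda>l. (p!l, k)) ` {..m}. 1 - a q) - (\<Prod>q\<in>(\<lambda>l. (p!l, k)) ` {..m}. 1 - (a(n := a n + \<epsilon>)) q)"
    by (rule prod_diff) (use a0 ab b1 e in auto)
  then have "c * ((\<Prod>l\<in>{..m}. 1 - b (p!l, k)) - (\<Prod>l\<in>{..m}. 1 - (b(n := b n + \<epsilon>)) (p!l, k)))
       \<le> c * ((\<Prod>l\<in>{..m}. 1 - a (p!l, k)) - (\<Prod>l\<in>{..m}. 1 - (a(n := a n + \<epsilon>)) (p!l, k)))"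
    unfolding eq using c by (rule mult_left_mono)
  then show ?thesis by (simp add: algebra_simps)
qed

lemma flow_diff:
  "flow V C nh S r x j i - flow V C nh S r x' j i =
   (\<Sum>k\<in>C. \<Sum>v\<in>V. \<Sum>m\<in>{m. Suc m < length (route_path nh S v k) \<and> route_path nh S v k ! m = i \<and> route_path nh S v k ! Suc m = j}.
      r v k * (\<Prod>l\<in>{..m}. (1 - x (route_path nh S v k ! l, k))) - r v k * (\<Prod>l\<in>{..m}. (1 - x' (route_path nh S v k ! l, k))))"
  by (simp add: flow_def flow_k_def Let_def sum_subtractf)

lemma flow_dr:
  fixes a b :: "'v \<times> 'k \<Rightarrow> real"
  assumes d: "\<forall>v\<in>V. \<forall>k\<in>C. distinct (route_path nh S v k)" and c: "\<forall>v\<in>V. \<forall>k\<in>C. 0 \<le> r v k"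
    and a0: "\<forall>q. 0 \<le> a q" and ab: "\<forall>q. a q \<le> b q" and b1: "\<forall>q. b q \<le> 1" and e: "0 \<le> \<epsilon>"
  shows "flow V C nh S r b j i - flow V C nh S r (b(n := b n + \<epsilon>)) j i
       \<le> flow V C nh S r a j i - flow V C nh S r (a(n := a n + \<epsilon>)) j i"
  unfolding flow_diff
  apply (intro sum_mono)
  apply (rule term_dr)
  using d c a0 ab b1 e by auto

lemma flow_mono:
  fixes a b :: "'v \<times> 'k \<Rightarrow> real"
  assumes c: "\<forall>v\<in>V. \<forall>k\<in>C. 0 \<le> r v k"
    and ab: "\<forall>q. a q \<le> b q" and b1: "\<forall>q. b q \<le> 1"
  shows "flow V C nh S r b j i \<le> flow V C nh S r a j i"
  unfolding flow_def flow_k_def Let_def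
  apply (intro sum_mono mult_left_mono prod_mono1)
  using c ab b1 by auto

lemma flow_nn:
  fixes b :: "'v \<times> 'k \<Rightarrow> real"
  assumes c: "\<forall>v\<in>V. \<forall>k\<in>C. 0 \<le> r v k" and b1: "\<forall>q. b q \<le> 1"
  shows "0 \<le> flow V C nh S r b j i"
  unfolding flow_def flow_k_def Let_def
  apply (intro sum_nonneg mult_nonneg_nonneg prod_nn)
  using c b1 by auto


theorem lemma1:
  fixes V :: "'v set" and E :: "('v \<times> 'v) set" and C :: "'k set"
    and S :: "'k \<Rightarrow> 'v set" and r :: "'v \<Rightarrow> 'k \<Rightarrow> real"
    and nh :: "'v \<Rightarrow> 'k \<Rightarrow> 'v"
    and D :: "'v \<Rightarrow> 'v \<Rightarrow> real \<Rightarrow> real" and Bn :: "'v \<Rightarrow> real \<Rightarrow> real"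
    and A B :: "('v \<times> 'k \<Rightarrow> real) \<Rightarrow> real"
  assumes finV: "finite V" and finC: "finite C"
    and E_sub: "E \<subseteq> V \<times> V"
    and E_sym: "\<And>i j. (i, j) \<in> E \<Longrightarrow> (j, i) \<in> E"
    and S_sub: "\<And>k. k \<in> C \<Longrightarrow> S k \<subseteq> V"
    and S_ne: "\<And>k. k \<in> C \<Longrightarrow> S k \<noteq> {}"
    and r_nonneg: "\<And>v k. v \<in> V \<Longrightarrow> k \<in> C \<Longrightarrow> r v k \<ge> 0"
    and D_cost: "\<And>i j. (i, j) \<in> E \<Longrightarrow> cost_fun (D i j)"
    and B_cost: "\<And>i. i \<in> V \<Longrightarrow> cost_fun (Bn i)"
    and nh_nbr: "\<And>i k. i \<in> V \<Longrightarrow> k \<in> C \<Longrightarrow> i \<notin> S k \<Longrightarrow> (i, nh i k) \<in> E"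
    and reach: "\<And>v k. v \<in> V \<Longrightarrow> k \<in> C \<Longrightarrow> \<exists>n. ((\<lambda>i. nh i k) ^^ n) v \<in> S k"
    and loopfree: "\<And>v k. v \<in> V \<Longrightarrow> k \<in> C \<Longrightarrow> distinct (route_path nh S v k)"
    and A_def: "\<And>y. A y = (\<Sum>(i, j)\<in>E. D i j (flow V C nh S r (\<lambda>_. 0) i j))
                          - (\<Sum>(i, j)\<in>E. D i j (flow V C nh S r y i j))"
    and B_def: "\<And>y. B y = (\<Sum>i\<in>V. Bn i (\<Sum>k\<in>C. y (i, k)))"
  shows "(\<forall>y\<in>unit_box (var_index V C S). A y \<ge> 0)
       \<and> (\<forall>y\<in>unit_box (var_index V C S). \<forall>y'\<in>unit_box (var_index V C S). y \<le> y' \<longrightarrow> A y \<le> A y')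
       \<and> dr_submodular_on (unit_box (var_index V C S)) A
       \<and> convex_fun_on (unit_box (var_index V C S)) B"
proof -
  let ?X = "unit_box (var_index V C S)"
  let ?F = "\<lambda>y i j. flow V C nh S r y i j"
  have box: "\<And>y. y \<in> ?X \<Longrightarrow> \<forall>q. 0 \<le> y q \<and> y q \<le> 1"
    unfolding unit_box_def by auto
  have finE: "finite E" using finite_subset[OF E_sub] finV by auto
  have d: "\<forall>v\<in>V. \<forall>k\<in>C. distinct (route_path nh S v k)" using loopfree by auto
  have c: "\<forall>v\<in>V. \<forall>k\<in>C. 0 \<le> r v k" using r_nonneg by auto
  have Dmono: "\<And>i j x y. (i, j) \<in> E \<Longrightarrow> 0 \<le> x \<Longrightarrow> x \<le> y \<Longrightarrow> D i j x \<le> D i j y"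
    using D_cost unfolding cost_fun_def by (meson atLeast_iff mono_onD order_trans)
  have Amono: "A y \<le> A y'" if y: "\<forall>q. 0 \<le> y q" and yy: "\<forall>q. y q \<le> y' q" and y1: "\<forall>q. y' q \<le> 1" for y y'
  proof -
    have "(\<Sum>(i, j)\<in>E. D i j (?F y' i j)) \<le> (\<Sum>(i, j)\<in>E. D i j (?F y i j))"
    proof (intro sum_mono, clarify)
      fix i j assume ij: "(i, j) \<in> E"
      show "D i j (?F y' i j) \<le> D i j (?F y i j)"
        by (rule Dmono[OF ij flow_nn flow_mono]) (use c y yy y1 in auto)
    qed
    then show ?thesis unfolding A_def by simp
  qed
  have P1: "\<forall>y\<in>?X. A y \<ge> 0"
  proof
    fix y assume "y \<in> ?X"
    then have "A (\<lambda>_. 0) \<le> A y" using box by (intro Amono) auto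
    then show "A y \<ge> 0" by (simp add: A_def)
  qed
  have P2: "\<forall>y\<in>?X. \<forall>y'\<in>?X. y \<le> y' \<longrightarrow> A y \<le> A y'"
    using box Amono by (auto simp: le_fun_def)
  have P3: "dr_submodular_on ?X A"
    unfolding dr_submodular_on_def
  proof (intro allI impI, elim conjE)
    fix a b :: "'v \<times> 'k \<Rightarrow> real" and n and \<epsilon> :: real
    assume aX: "a \<in> ?X" and bX: "b \<in> ?X" and ab: "a \<le> b" and e: "0 \<le> \<epsilon>"
      and a'X: "a(n := a n + \<epsilon>) \<in> ?X" and b'X: "b(n := b n + \<epsilon>) \<in> ?X"
    let ?a' = "a(n := a n + \<epsilon>)" and ?b' = "b(n := b n + \<epsilon>)"
    have a0: "\<forall>q. 0 \<le> a q" and b1: "\<forall>q. b q \<le> 1" and a'1: "\<forall>q. ?a' q \<le> 1" and b'1: "\<forall>q. ?b' q \<le> 1"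
      using box[OF aX] box[OF bX] box[OF a'X] box[OF b'X] by auto
    have ab': "\<forall>q. a q \<le> b q" using ab by (auto simp: le_fun_def)
    have edge: "D i j (?F b i j) - D i j (?F ?b' i j) \<le> D i j (?F a i j) - D i j (?F ?a' i j)"
      if ij: "(i, j) \<in> E" for i j
    proof (rule key_convex[where g="D i j"])
      show "convex_on {0..} (D i j)" "mono_on {0..} (D i j)"
        using D_cost[OF ij] unfolding cost_fun_def by auto
      show "0 \<le> ?F ?b' i j" by (rule flow_nn) (use c b'1 in auto)
      show "?F ?b' i j \<le> ?F b i j" by (rule flow_mono) (use c b1 b'1 e in auto)
      show "0 \<le> ?F ?a' i j" by (rule flow_nn) (use c a'1 in auto)
      show "?F ?a' i j \<le> ?F a i j" by (rule flow_mono) (use c a'1 e in auto)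
      show "?F b i j \<le> ?F a i j" by (rule flow_mono) (use c ab' b1 in auto)
      show "?F b i j - ?F ?b' i j \<le> ?F a i j - ?F ?a' i j"
        by (rule flow_dr) (use d c a0 ab' b1 e in auto)
    qed
    have "(\<Sum>(i, j)\<in>E. D i j (?F b i j) - D i j (?F ?b' i j)) \<le> (\<Sum>(i, j)\<in>E. D i j (?F a i j) - D i j (?F ?a' i j))"
      by (intro sum_mono) (use edge in auto)
    then show "A ?b' - A b \<le> A ?a' - A a"
      unfolding A_def by (simp add: sum_subtractf[symmetric] case_prod_beta)
  qed
  have P4: "convex_fun_on ?X B"
    unfolding convex_fun_on_def
  proof (intro ballI allI impI, elim conjE)
    fix x y :: "'v \<times> 'k \<Rightarrow> real" and t :: real
    assume xX: "x \<in> ?X" and yX: "y \<in> ?X" and t0: "0 \<le> t" and t1: "t \<le> 1"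
    have each: "Bn i (\<Sum>k\<in>C. t * x (i, k) + (1 - t) * y (i, k)) \<le> t * Bn i (\<Sum>k\<in>C. x (i, k)) + (1 - t) * Bn i (\<Sum>k\<in>C. y (i, k))"
      if i: "i \<in> V" for i
    proof -
      have cv: "convex_on {0..} (Bn i)" using B_cost[OF i] unfolding cost_fun_def by auto
      have sx: "0 \<le> (\<Sum>k\<in>C. x (i, k))" and sy: "0 \<le> (\<Sum>k\<in>C. y (i, k))"
        using box[OF xX] box[OF yX] by (auto intro: sum_nonneg)
      have "(\<Sum>k\<in>C. t * x (i, k) + (1 - t) * y (i, k)) = (1 - (1 - t)) *\<^sub>R (\<Sum>k\<in>C. x (i, k)) + (1 - t) *\<^sub>R (\<Sum>k\<in>C. y (i, k))"
        by (simp add: sum.distrib sum_distrib_left)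
      moreover have "Bn i ((1 - (1 - t)) *\<^sub>R (\<Sum>k\<in>C. x (i, k)) + (1 - t) *\<^sub>R (\<Sum>k\<in>C. y (i, k)))
          \<le> (1 - (1 - t)) * Bn i (\<Sum>k\<in>C. x (i, k)) + (1 - t) * Bn i (\<Sum>k\<in>C. y (i, k))"
        by (rule convex_onD[OF cv]) (use t0 t1 sx sy in auto)
      ultimately show ?thesis by simp
    qed
    have "(\<Sum>i\<in>V. Bn i (\<Sum>k\<in>C. t * x (i, k) + (1 - t) * y (i, k)))
        \<le> (\<Sum>i\<in>V. t * Bn i (\<Sum>k\<in>C. x (i, k)) + (1 - t) * Bn i (\<Sum>k\<in>C. y (i, k)))"
      by (intro sum_mono each)
    then show "B (\<lambda>p. t * x p + (1 - t) * y p) \<le> t * B x + (1 - t) * B y"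
      unfolding B_def by (simp add: sum.distrib sum_distrib_left)
  qed
  show ?thesis using P1 P2 P3 P4 by blast
qed

end
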